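(* Let $\mathrm{V}=\{1,\dots,n\}$ with $n=r_1r_2$ for integers $r_1,r_2\ge2$. Then there exist a graph $\mathrm{G}$ with node set $\mathrm{V}$, a clique coverage $\mathsf{H}^\ast$ of $\mathrm{G}$ consisting only of cliques of size $r_1$ or $r_2$, and a sequence $\mathrm{Q}_0,\dots,\mathrm{Q}_{r_1+r_2-1}$ of cliques from $\mathsf{H}^\ast$, such that the clique-gossip averaging algorithm along this sequence satisfies $\mathbf{x}(r_1+r_2)=\big(\frac1n\sum_{j=1}^n\mathbf{x}_j(0)\big)\mathbf{1}$ for every initial value $\mathbf{x}(0)\in\mathbb{R}^n$; in particular it converges globally in finite time, in $r_1+r_2$ steps.
   Context: A clique of a simple undirected graph $\mathrm{G}$ on $\mathrm{V}$ is a vertex subset inducing a complete subgraph; a clique coverage is a finite set of cliques whose union is $\mathrm{V}$ and whose union of induced subgraphs is connected. The clique-gossip averaging algorithm along a sequence of cliques $\mathrm{Q}_0,\mathrm{Q}_1,\dots$ acts on $\mathbf{x}(t)\in\mathbb{R}^n$ by $\mathbf{x}_i(t+1)=\frac{1}{|\mathrm{Q}_t|}\sum_{j\in\mathrm{Q}_t}\mathbf{x}_j(t)$ if $i\in\mathrm{Q}_t$ and $\mathbf{x}_i(t+1)=\mathbf{x}_i(t)$ otherwise. $\mathbf{1}$ denotes the all-ones vector. It converges globally in finite time if for every initial value $\mathbf{x}(0)$ there is $T\ge0$ with $\mathbf{x}(T)\in\mathrm{span}\{\mathbf{1}\}$. *)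

theory Defs
  imports Complex_Main
begin

definition simple_graph :: "nat set \<Rightarrow> (nat \<Rightarrow> nat \<Rightarrow> bool) \<Rightarrow> bool" where
  "simple_graph V E \<longleftrightarrow>
     (\<forall>i j. E i j \<longrightarrow> i \<in> V \<and> j \<in> V) \<and>
     (\<forall>i j. E i j \<longrightarrow> E j i) \<and> (\<forall>i. \<not> E i i)"

definition is_clique :: "nat set \<Rightarrow> (nat \<Rightarrow> nat \<Rightarrow> bool) \<Rightarrow> nat set \<Rightarrow> bool" where
  "is_clique V E Q \<longleftrightarrow> Q \<subseteq> V \<and> (\<forall>i\<in>Q. \<forall>j\<in>Q. i \<noteq> j \<longrightarrow> E i j)"

definition union_edges :: "nat set set \<Rightarrow> nat \<Rightarrow> nat \<Rightarrow> bool" where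
  "union_edges H i j \<longleftrightarrow> i \<noteq> j \<and> (\<exists>Q\<in>H. i \<in> Q \<and> j \<in> Q)"

definition clique_coverage :: "nat set \<Rightarrow> (nat \<Rightarrow> nat \<Rightarrow> bool) \<Rightarrow> nat set set \<Rightarrow> bool" where
  "clique_coverage V E H \<longleftrightarrow>
     finite H \<and> (\<forall>Q\<in>H. is_clique V E Q) \<and> \<Union>H = V \<and>
     (\<forall>i\<in>V. \<forall>j\<in>V. (union_edges H)\<^sup>*\<^sup>* i j)"

definition gossip_step :: "nat set \<Rightarrow> (nat \<Rightarrow> real) \<Rightarrow> (nat \<Rightarrow> real)" where
  "gossip_step Q x = (\<lambda>i. if i \<in> Q then (\<Sum>j\<in>Q. x j) / real (card Q) else x i)"

primrec gossip :: "(nat \<Rightarrow> nat set) \<Rightarrow> (nat \<Rightarrow> real) \<Rightarrow> nat \<Rightarrow> (nat \<Rightarrow> real)" where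
  "gossip Qs x0 0 = x0"
| "gossip Qs x0 (Suc t) = gossip_step (Qs t) (gossip Qs x0 t)"

definition converges_finite_time :: "nat \<Rightarrow> (nat \<Rightarrow> nat set) \<Rightarrow> bool" where
  "converges_finite_time n Qs \<longleftrightarrow>
     (\<forall>x0. \<exists>T. \<exists>c::real. \<forall>i\<in>{1..n}. gossip Qs x0 T i = c)"

end

theory Submission
  imports Defs
begin

definition Rw :: "nat \<Rightarrow> nat \<Rightarrow> nat \<Rightarrow> nat set" where
  "Rw r1 r2 b = {i\<in>{1..r1*r2}. (i-1) div r1 = b}"
definition Cl :: "nat \<Rightarrow> nat \<Rightarrow> nat \<Rightarrow> nat set" where
  "Cl r1 r2 a = {i\<in>{1..r1*r2}. (i-1) mod r1 = a}"
definition QQ :: "nat \<Rightarrow> nat \<Rightarrow> nat \<Rightarrow> nat set" where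
  "QQ r1 r2 t = (if t < r2 then Rw r1 r2 t else Cl r1 r2 (t - r2))"
definition rowavg :: "nat \<Rightarrow> nat \<Rightarrow> (nat \<Rightarrow> real) \<Rightarrow> nat \<Rightarrow> real" where
  "rowavg r1 r2 x0 b = (\<Sum>j\<in>Rw r1 r2 b. x0 j) / real r1"

context
  fixes r1 r2 :: nat
  assumes r1: "r1 \<ge> 2" and r2: "r2 \<ge> 2"
begin

lemma div_lt: "i \<in> {1..r1*r2} \<Longrightarrow> (i-1) div r1 < r2"
  by (rule less_mult_imp_div_less) (auto simp: mult.commute)

lemma div_lt': "1 \<le> i \<Longrightarrow> i \<le> r1*r2 \<Longrightarrow> (i - Suc 0) div r1 < r2"
  using div_lt[of i] by simp

lemma Rw_img: assumes b: "b < r2" shows "Rw r1 r2 b = (\<lambda>a. 1 + a + r1*b) ` {..<r1}"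
proof (intro equalityI subsetI)
  fix i assume i: "i \<in> Rw r1 r2 b"
  then have "i = 1 + (i-1) mod r1 + r1*b"
    unfolding Rw_def using mod_mult_div_eq[of "i-1" r1] by auto
  moreover have "(i-1) mod r1 < r1" using r1 by simp
  ultimately show "i \<in> (\<lambda>a. 1 + a + r1*b) ` {..<r1}" by blast
next
  fix i assume "i \<in> (\<lambda>a. 1 + a + r1*b) ` {..<r1}"
  then obtain a where a: "a < r1" and ia: "i = 1 + a + r1*b" by auto
  have "r1*b + r1 = r1*(b+1)" by simp
  also have "\<dots> \<le> r1*r2" using b by (intro mult_le_mono2) simp
  finally have "1 + a + r1*b \<le> r1*r2" using a by simp
  moreover have "(a + r1*b) div r1 = b" using a by simp
  ultimately show "i \<in> Rw r1 r2 b" unfolding Rw_def ia by simp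
qed

lemma Cl_img: assumes a: "a < r1" shows "Cl r1 r2 a = (\<lambda>b. 1 + a + r1*b) ` {..<r2}"
proof (intro equalityI subsetI)
  fix i assume i: "i \<in> Cl r1 r2 a"
  then have "i = 1 + a + r1*((i-1) div r1)"
    unfolding Cl_def using mod_mult_div_eq[of "i-1" r1] by auto
  moreover have "(i-1) div r1 < r2" using i div_lt unfolding Cl_def by auto
  ultimately show "i \<in> (\<lambda>b. 1 + a + r1*b) ` {..<r2}" by blast
next
  fix i assume "i \<in> (\<lambda>b. 1 + a + r1*b) ` {..<r2}"
  then obtain b where b: "b < r2" and ia: "i = 1 + a + r1*b" by auto
  have "r1*b + r1 = r1*(b+1)" by simp
  also have "\<dots> \<le> r1*r2" using b by (intro mult_le_mono2) simp
  finally have "1 + a + r1*b \<le> r1*r2" using a by simp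
  moreover have "(a + r1*b) mod r1 = a" using a by simp
  ultimately show "i \<in> Cl r1 r2 a" unfolding Cl_def ia by simp
qed

lemma card_Rw: "b < r2 \<Longrightarrow> card (Rw r1 r2 b) = r1"
  by (simp add: Rw_img card_image inj_on_def)

lemma card_Cl: "a < r1 \<Longrightarrow> card (Cl r1 r2 a) = r2"
  using r1 by (simp add: Cl_img card_image inj_on_def)

lemma total: "(\<Sum>b<r2. \<Sum>j\<in>Rw r1 r2 b. x0 j) = (\<Sum>j=1..r1*r2. x0 j)"
  unfolding Rw_def by (rule sum.group) (auto simp: div_lt')

lemma phaseA: "t \<le> r2 \<Longrightarrow> gossip (QQ r1 r2) x0 t i =
   (if i \<in> {1..r1*r2} \<and> (i-1) div r1 < t then rowavg r1 r2 x0 ((i-1) div r1) else x0 i)"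
proof (induction t arbitrary: i)
  case 0 then show ?case by simp
next
  case (Suc t)
  have Q: "QQ r1 r2 t = Rw r1 r2 t" using Suc.prems by (simp add: QQ_def)
  have s: "(\<Sum>j\<in>Rw r1 r2 t. gossip (QQ r1 r2) x0 t j) = (\<Sum>j\<in>Rw r1 r2 t. x0 j)"
    using Suc.prems by (intro sum.cong) (auto simp: Suc.IH Rw_def)
  show ?case
  proof (cases "i \<in> Rw r1 r2 t")
    case True
    then show ?thesis using Suc.prems
      by (simp add: gossip_step_def Q s card_Rw rowavg_def) (simp add: Rw_def)
  next
    case False
    then show ?thesis using Suc.prems
      by (auto simp: gossip_step_def Q Suc.IH Rw_def)
  qed
qed

lemma phaseB: "s \<le> r1 \<Longrightarrow> i \<in> {1..r1*r2} \<Longrightarrow> gossip (QQ r1 r2) x0 (r2 + s) i =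
   (if (i-1) mod r1 < s then (\<Sum>j=1..r1*r2. x0 j) / real (r1*r2) else rowavg r1 r2 x0 ((i-1) div r1))"
proof (induction s arbitrary: i)
  case 0 then show ?case using phaseA[of r2] div_lt by simp
next
  case (Suc s)
  have Q: "QQ r1 r2 (r2 + s) = Cl r1 r2 s" by (simp add: QQ_def)
  have "(\<Sum>j\<in>Cl r1 r2 s. gossip (QQ r1 r2) x0 (r2+s) j) = (\<Sum>j\<in>Cl r1 r2 s. rowavg r1 r2 x0 ((j-1) div r1))"
    using Suc.prems by (intro sum.cong) (auto simp: Suc.IH Cl_def)
  also have "\<dots> = (\<Sum>b<r2. rowavg r1 r2 x0 b)"
    using Suc.prems r1 by (simp add: Cl_img sum.reindex inj_on_def)
  also have "\<dots> = (\<Sum>j=1..r1*r2. x0 j) / real r1"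
    by (simp add: rowavg_def sum_divide_distrib[symmetric] total)
  finally have s: "(\<Sum>j\<in>Cl r1 r2 s. gossip (QQ r1 r2) x0 (r2+s) j) = (\<Sum>j=1..r1*r2. x0 j) / real r1" .
  show ?case
  proof (cases "i \<in> Cl r1 r2 s")
    case True
    then show ?thesis using Suc.prems
      by (simp add: gossip_step_def Q s card_Cl) (simp add: Cl_def)
  next
    case False
    then show ?thesis using Suc.prems
      by (auto simp: gossip_step_def Q Suc.IH Cl_def)
  qed
qed

lemma ue: "Q \<in> H \<Longrightarrow> x \<in> Q \<Longrightarrow> y \<in> Q \<Longrightarrow> (union_edges H)\<^sup>*\<^sup>* x y"
proof (cases "x = y")
  case False
  assume "Q \<in> H" "x \<in> Q" "y \<in> Q"
  then have "union_edges H x y" using False unfolding union_edges_def by blast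
  then show ?thesis by (rule r_into_rtranclp)
qed simp

lemma conn:
  assumes i: "i \<in> {1..r1*r2}"
  defines "H \<equiv> Rw r1 r2 ` {..<r2} \<union> Cl r1 r2 ` {..<r1}"
  shows "(union_edges H)\<^sup>*\<^sup>* i 1 \<and> (union_edges H)\<^sup>*\<^sup>* 1 i"
proof -
  define a where "a = (i-1) mod r1"
  have a: "a < r1" using r1 by (simp add: a_def)
  have r2p: "0 < r2" using r2 by simp
  have C: "Cl r1 r2 a \<in> H" "Rw r1 r2 0 \<in> H" using a r2p by (auto simp: H_def)
  have m1: "i \<in> Cl r1 r2 a" using i by (simp add: Cl_def a_def)
  have m2: "1 + a \<in> Cl r1 r2 a" using a r2p by (auto simp: Cl_img)
  have m3: "1 + a \<in> Rw r1 r2 0" "1 \<in> Rw r1 r2 0" using a r1 r2p by (auto simp: Rw_img image_iff intro: bexI[of _ 0])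
  show ?thesis
    using ue[OF C(1) m1 m2] ue[OF C(1) m2 m1] ue[OF C(2) m3(1) m3(2)] ue[OF C(2) m3(2) m3(1)]
    by (meson rtranclp_trans)
qed

end

theorem theorem2:
  fixes r1 r2 n :: nat
  assumes "r1 \<ge> 2" and "r2 \<ge> 2" and "n = r1 * r2"
  shows "\<exists>E H Qs.
    simple_graph {1..n} E \<and>
    clique_coverage {1..n} E H \<and>
    (\<forall>Q\<in>H. card Q = r1 \<or> card Q = r2) \<and>
    (\<forall>t < r1 + r2. Qs t \<in> H) \<and>
    (\<forall>x0::nat \<Rightarrow> real. \<forall>i\<in>{1..n}.
        gossip Qs x0 (r1 + r2) i = (1 / real n) * (\<Sum>j=1..n. x0 j)) \<and>
    converges_finite_time n Qs"
proof -
  note r = assms(1,2)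
  define H where "H = Rw r1 r2 ` {..<r2} \<union> Cl r1 r2 ` {..<r1}"
  define E where "E = union_edges H"
  have sub: "\<forall>Q\<in>H. Q \<subseteq> {1..n}" using assms(3) by (auto simp: H_def Rw_def Cl_def)
  have sg: "simple_graph {1..n} E"
    using sub unfolding simple_graph_def E_def union_edges_def by blast
  have cl: "\<forall>Q\<in>H. is_clique {1..n} E Q"
    using sub unfolding is_clique_def E_def union_edges_def by blast
  have un: "\<Union>H = {1..n}"
  proof
    show "\<Union>H \<subseteq> {1..n}" using sub by blast
    show "{1..n} \<subseteq> \<Union>H"
    proof
      fix i assume i: "i \<in> {1..n}"
      then have "i \<in> Rw r1 r2 ((i-1) div r1)" "(i-1) div r1 < r2"
        using assms(3) div_lt[OF r, of i] by (auto simp: Rw_def)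
      then show "i \<in> \<Union>H" unfolding H_def by blast
    qed
  qed
  have cn: "\<forall>i\<in>{1..n}. \<forall>j\<in>{1..n}. (union_edges H)\<^sup>*\<^sup>* i j"
    using conn[OF r] assms(3) unfolding H_def by (meson rtranclp_trans)
  have cc: "clique_coverage {1..n} E H"
    unfolding clique_coverage_def using cl un cn by (simp add: H_def)
  have cards: "\<forall>Q\<in>H. card Q = r1 \<or> card Q = r2"
    unfolding H_def using card_Rw[OF r] card_Cl[OF r] by auto
  have qs: "\<forall>t < r1 + r2. QQ r1 r2 t \<in> H"
    unfolding H_def QQ_def by auto
  have fin: "\<forall>x0::nat \<Rightarrow> real. \<forall>i\<in>{1..n}.
        gossip (QQ r1 r2) x0 (r1 + r2) i = (1 / real n) * (\<Sum>j=1..n. x0 j)"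
  proof (intro allI ballI)
    fix x0 :: "nat \<Rightarrow> real" and i assume i: "i \<in> {1..n}"
    have "(i-1) mod r1 < r1" using r by simp
    then show "gossip (QQ r1 r2) x0 (r1 + r2) i = (1 / real n) * (\<Sum>j=1..n. x0 j)"
      using phaseB[OF r, of r1 i x0] i assms(3) by (simp add: add.commute)
  qed
  have cv: "converges_finite_time n (QQ r1 r2)"
    unfolding converges_finite_time_def using fin by blast
  show ?thesis using sg cc cards qs fin cv by blast
qed

end
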